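(* Let $\lambda=(\lambda^{(1)},\lambda^{(2)})$ with $\lambda^{(1)},\lambda^{(2)}\in\mathbb R^{\mathcal U_g}_{\ge0}$ and $\mu=(\mu^{(1)}_k,\mu^{(2)}_k)_{k\in[N]}$ with $\mu^{(1)}_k,\mu^{(2)}_k\in\mathbb R^{\mathcal U_{l,k}}_{\ge0}$ be non-negative. Then an optimal solution $\mathbf h^*=(h_1^*,\dots,h_N^* )$ of the inner problem $\min_{\mathbf h\in\mathcal H^N}\mathcal L(\mathbf h,\lambda,\mu)$ is realized by local deterministic classifiers $h^*_k$, $k\in[N]$, satisfying $$h^*_k(x)=e_y,\qquad y\in\arg\max_{j\in[m]}\Big(\sum_{a\in\mathcal A}\mathbb P(A=a\mid X=x,K=k)\,\big[\mathbf M^{\lambda,\mu}(a,k)\big]^\top\eta(x,a,k)\Big)_j,$$ where $$\mathbf M^{\lambda,\mu}(a,k)=\mathbf I-\frac{1}{p_{a,k}}\Big[\sum_{u\in\mathcal U_g}(\lambda^{(1)}_u-\lambda^{(2)}_u)\mathbf D^{a,k}_u+\sum_{u\in\mathcal U_{l,k}}(\mu^{(1)}_{k,u}-\mu^{(2)}_{k,u})\mathbf D^{a,k}_u\Big].$$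
   Context: Let $(X,A,Y,K)$ be a random tuple with $X\in\mathcal X\subseteq\mathbb R^d$, sensitive attribute $A$ in a finite set $\mathcal A$, label $Y\in[m]$ and client index $K\in[N]$; $p_{a,k}=\mathbb P(A=a,K=k)>0$. The Bayes score is $\eta(x,a,k)\in\Delta_m$ with $\eta_y(x,a,k)=\mathbb P(Y=y\mid X=x,A=a,K=k)$, where $\Delta_m$ is the probability simplex in $\mathbb R^m$ and $e_y$ the $y$-th standard basis vector. $\mathcal H=\{h:\mathcal X\to\Delta_m\}$ is the set of (measurable, randomized, attribute-blind) classifiers: given $X=x$, the prediction $\widehat Y$ satisfies $\mathbb P(\widehat Y=j\mid X=x)=h_j(x)$; $h$ is deterministic if its values lie in $\{e_1,\dots,e_m\}$. A federated classifier is $\mathbf h=(h_1,\dots,h_N)\in\mathcal H^N$, client $k$ using $h_k$. Confusion matrices: $\mathbf C^{a,k}_{i,j}(h_k)=\mathbb P(Y=i,\widehat Y=j\mid A=a,K=k)$. $\langle\mathbf A,\mathbf B\rangle=\sum_{i,j}a_{ij}b_{ij}$; $\mathbf 1_{m\times m}$ is the all-ones matrix, $\mathbf I$ the identity. Risk: $\mathcal R(\mathbf h)=\sum_{a,k}p_{a,k}\langle\mathbf 1_{m\times m}-\mathbf I,\mathbf C^{a,k}(h_k)\rangle$. Given finite index sets $\mathcal U_g$, $\mathcal U_{l,k}$ and fixed real $m\times m$ matrices $\mathbf D^{a,k}_u$: $\mathscr D^g_u(\mathbf h)=\sum_{a}\sum_{k}\langle\mathbf D^{a,k}_u,\mathbf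 C^{a,k}(h_k)\rangle$ ($u\in\mathcal U_g$) and $\mathscr D^{l,k}_u(\mathbf h)=\sum_a\langle\mathbf D^{a,k}_u,\mathbf C^{a,k}(h_k)\rangle$ ($u\in\mathcal U_{l,k}$). For constants $\xi^g,\xi^{l,k}>0$, the Lagrangian of the fair problem (minimize $\mathcal R$ subject to $|\mathscr D^g_u|\le\xi^g$ and $|\mathscr D^{l,k}_u|\le\xi^{l,k}$) is $$\mathcal L(\mathbf h,\lambda,\mu)=\mathcal R(\mathbf h)+\sum_{u\in\mathcal U_g}\big[(\lambda^{(1)}_u-\lambda^{(2)}_u)\mathscr D^g_u(\mathbf h)-(\lambda^{(1)}_u+\lambda^{(2)}_u)\xi^g\big]+\sum_{k\in[N]}\sum_{u\in\mathcal U_{l,k}}\big[(\mu^{(1)}_{k,u}-\mu^{(2)}_{k,u})\mathscr D^{l,k}_u(\mathbf h)-(\mu^{(1)}_{k,u}+\mu^{(2)}_{k,u})\xi^{l,k}\big].$$ *)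

theory Defs
  imports "HOL-Probability.Probability"
begin

text \<open>Feature space: a measurable space Mx (the paper's X in a subset of R^d with its Borel sets).
  Sensitive attributes: finite type 'a.  Clients [N]: finite type 'k.  Labels [m]: finite type 'y.
  The joint law of (X,K) is a probability measure nu on Mx x count_space UNIV;
  q x k a = P(A = a | X = x, K = k);  eta x a k i = P(Y = i | X = x, A = a, K = k).
  A federated classifier is h :: 'k => 'x => 'y => real, client k using h k.\<close>

type_synonym 'y mat = "'y \<Rightarrow> 'y \<Rightarrow> real"

definition prob_vec :: "('i::finite \<Rightarrow> real) \<Rightarrow> bool" where
  "prob_vec v \<longleftrightarrow> (\<forall>i. 0 \<le> v i) \<and> (\<Sum>i\<in>UNIV. v i) = 1"

definition basis_vec :: "'i \<Rightarrow> 'i \<Rightarrow> real" where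
  "basis_vec y = (\<lambda>j. if j = y then 1 else 0)"

definition is_classifier :: "'x measure \<Rightarrow> ('x \<Rightarrow> 'y::finite \<Rightarrow> real) \<Rightarrow> bool" where
  "is_classifier Mx h \<longleftrightarrow> (\<forall>j. (\<lambda>x. h x j) \<in> borel_measurable Mx) \<and> (\<forall>x\<in>space Mx. prob_vec (h x))"

definition is_deterministic :: "'x measure \<Rightarrow> ('x \<Rightarrow> 'y::finite \<Rightarrow> real) \<Rightarrow> bool" where
  "is_deterministic Mx h \<longleftrightarrow> (\<forall>x\<in>space Mx. \<exists>y. h x = basis_vec y)"

definition law_XKA :: "('x \<times> 'k) measure \<Rightarrow> ('x \<Rightarrow> 'k \<Rightarrow> 'a \<Rightarrow> real) \<Rightarrow> (('x \<times> 'k) \<times> 'a) measure" where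
  "law_XKA \<nu> q = density (\<nu> \<Otimes>\<^sub>M count_space UNIV) (\<lambda>((x,k),a). ennreal (q x k a))"

text \<open>Joint law of ((X,K),(A,Y,Yhat)) when client k predicts with h k
  (prediction drawn from h k X, independently of (A,Y) given (X,K)).\<close>
definition full_law :: "('x \<times> 'k) measure \<Rightarrow> ('x \<Rightarrow> 'k \<Rightarrow> 'a \<Rightarrow> real) \<Rightarrow>
    ('x \<Rightarrow> 'a \<Rightarrow> 'k \<Rightarrow> 'y \<Rightarrow> real) \<Rightarrow> ('k \<Rightarrow> 'x \<Rightarrow> 'y \<Rightarrow> real) \<Rightarrow>
    (('x \<times> 'k) \<times> ('a \<times> 'y \<times> 'y)) measure" where
  "full_law \<nu> q \<eta> h = density (\<nu> \<Otimes>\<^sub>M count_space UNIV)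
     (\<lambda>((x,k),(a,i,j)). ennreal (q x k a * \<eta> x a k i * h k x j))"

definition pAK :: "('x \<times> 'k) measure \<Rightarrow> ('x \<Rightarrow> 'k \<Rightarrow> 'a \<Rightarrow> real) \<Rightarrow> 'a \<Rightarrow> 'k \<Rightarrow> real" where
  "pAK \<nu> q a k = measure (law_XKA \<nu> q) {z. snd (fst z) = k \<and> snd z = a}"

definition confusion :: "('x \<times> 'k) measure \<Rightarrow> ('x \<Rightarrow> 'k \<Rightarrow> 'a \<Rightarrow> real) \<Rightarrow>
    ('x \<Rightarrow> 'a \<Rightarrow> 'k \<Rightarrow> 'y \<Rightarrow> real) \<Rightarrow> ('k \<Rightarrow> 'x \<Rightarrow> 'y \<Rightarrow> real) \<Rightarrow> 'a \<Rightarrow> 'k \<Rightarrow> 'y mat" where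
  "confusion \<nu> q \<eta> h a k i j =
     (let P = full_law \<nu> q \<eta> h;
          E = {z. snd (fst z) = k \<and> fst (snd z) = a}
      in measure P (E \<inter> {z. fst (snd (snd z)) = i \<and> snd (snd (snd z)) = j}) / measure P E)"

definition mat_inner :: "'y::finite mat \<Rightarrow> 'y mat \<Rightarrow> real" where
  "mat_inner A B = (\<Sum>i\<in>UNIV. \<Sum>j\<in>UNIV. A i j * B i j)"

definition ones_mat :: "'y mat" where "ones_mat = (\<lambda>i j. 1)"
definition id_mat :: "'y mat" where "id_mat = (\<lambda>i j. if i = j then 1 else 0)"

definition risk :: "('x \<times> 'k) measure \<Rightarrow> ('x \<Rightarrow> 'k::finite \<Rightarrow> 'a::finite \<Rightarrow> real) \<Rightarrow>
    ('x \<Rightarrow> 'a \<Rightarrow> 'k \<Rightarrow> 'y::finite \<Rightarrow> real) \<Rightarrow> ('k \<Rightarrow> 'x \<Rightarrow> 'y \<Rightarrow> real) \<Rightarrow> real" where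
  "risk \<nu> q \<eta> h = (\<Sum>a\<in>UNIV. \<Sum>k\<in>UNIV. pAK \<nu> q a k *
      mat_inner (\<lambda>i j. ones_mat i j - id_mat i j) (confusion \<nu> q \<eta> h a k))"

definition global_disp :: "('x \<times> 'k) measure \<Rightarrow> ('x \<Rightarrow> 'k::finite \<Rightarrow> 'a::finite \<Rightarrow> real) \<Rightarrow>
    ('x \<Rightarrow> 'a \<Rightarrow> 'k \<Rightarrow> 'y::finite \<Rightarrow> real) \<Rightarrow> ('u \<Rightarrow> 'a \<Rightarrow> 'k \<Rightarrow> 'y mat) \<Rightarrow> 'u \<Rightarrow>
    ('k \<Rightarrow> 'x \<Rightarrow> 'y \<Rightarrow> real) \<Rightarrow> real" where
  "global_disp \<nu> q \<eta> Dg u h = (\<Sum>a\<in>UNIV. \<Sum>k\<in>UNIV. mat_inner (Dg u a k) (confusion \<nu> q \<eta> h a k))"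

definition local_disp :: "('x \<times> 'k) measure \<Rightarrow> ('x \<Rightarrow> 'k \<Rightarrow> 'a::finite \<Rightarrow> real) \<Rightarrow>
    ('x \<Rightarrow> 'a \<Rightarrow> 'k \<Rightarrow> 'y::finite \<Rightarrow> real) \<Rightarrow> ('k \<Rightarrow> 'v \<Rightarrow> 'a \<Rightarrow> 'y mat) \<Rightarrow> 'k \<Rightarrow> 'v \<Rightarrow>
    ('k \<Rightarrow> 'x \<Rightarrow> 'y \<Rightarrow> real) \<Rightarrow> real" where
  "local_disp \<nu> q \<eta> Dl k u h = (\<Sum>a\<in>UNIV. mat_inner (Dl k u a) (confusion \<nu> q \<eta> h a k))"

definition lagrangian :: "('x \<times> 'k) measure \<Rightarrow> ('x \<Rightarrow> 'k::finite \<Rightarrow> 'a::finite \<Rightarrow> real) \<Rightarrow>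
    ('x \<Rightarrow> 'a \<Rightarrow> 'k \<Rightarrow> 'y::finite \<Rightarrow> real) \<Rightarrow>
    'u set \<Rightarrow> ('k \<Rightarrow> 'v set) \<Rightarrow> ('u \<Rightarrow> 'a \<Rightarrow> 'k \<Rightarrow> 'y mat) \<Rightarrow> ('k \<Rightarrow> 'v \<Rightarrow> 'a \<Rightarrow> 'y mat) \<Rightarrow>
    real \<Rightarrow> ('k \<Rightarrow> real) \<Rightarrow>
    ('k \<Rightarrow> 'x \<Rightarrow> 'y \<Rightarrow> real) \<Rightarrow>
    ('u \<Rightarrow> real) \<Rightarrow> ('u \<Rightarrow> real) \<Rightarrow> ('k \<Rightarrow> 'v \<Rightarrow> real) \<Rightarrow> ('k \<Rightarrow> 'v \<Rightarrow> real) \<Rightarrow> real" where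
  "lagrangian \<nu> q \<eta> Ug Ul Dg Dl \<xi>g \<xi>l h lam1 lam2 mu1 mu2 =
     risk \<nu> q \<eta> h
     + (\<Sum>u\<in>Ug. (lam1 u - lam2 u) * global_disp \<nu> q \<eta> Dg u h - (lam1 u + lam2 u) * \<xi>g)
     + (\<Sum>k\<in>UNIV. \<Sum>u\<in>Ul k. (mu1 k u - mu2 k u) * local_disp \<nu> q \<eta> Dl k u h
                             - (mu1 k u + mu2 k u) * \<xi>l k)"

definition M_mat :: "('x \<times> 'k) measure \<Rightarrow> ('x \<Rightarrow> 'k \<Rightarrow> 'a \<Rightarrow> real) \<Rightarrow>
    'u set \<Rightarrow> ('k \<Rightarrow> 'v set) \<Rightarrow> ('u \<Rightarrow> 'a \<Rightarrow> 'k \<Rightarrow> 'y mat) \<Rightarrow> ('k \<Rightarrow> 'v \<Rightarrow> 'a \<Rightarrow> 'y mat) \<Rightarrow>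
    ('u \<Rightarrow> real) \<Rightarrow> ('u \<Rightarrow> real) \<Rightarrow> ('k \<Rightarrow> 'v \<Rightarrow> real) \<Rightarrow> ('k \<Rightarrow> 'v \<Rightarrow> real) \<Rightarrow>
    'a \<Rightarrow> 'k \<Rightarrow> 'y mat" where
  "M_mat \<nu> q Ug Ul Dg Dl lam1 lam2 mu1 mu2 a k = (\<lambda>i j.
     id_mat i j - (1 / pAK \<nu> q a k) *
       ((\<Sum>u\<in>Ug. (lam1 u - lam2 u) * Dg u a k i j) + (\<Sum>u\<in>Ul k. (mu1 k u - mu2 k u) * Dl k u a i j)))"

definition score :: "('x \<times> 'k) measure \<Rightarrow> ('x \<Rightarrow> 'k \<Rightarrow> 'a::finite \<Rightarrow> real) \<Rightarrow>
    ('x \<Rightarrow> 'a \<Rightarrow> 'k \<Rightarrow> 'y::finite \<Rightarrow> real) \<Rightarrow>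
    'u set \<Rightarrow> ('k \<Rightarrow> 'v set) \<Rightarrow> ('u \<Rightarrow> 'a \<Rightarrow> 'k \<Rightarrow> 'y mat) \<Rightarrow> ('k \<Rightarrow> 'v \<Rightarrow> 'a \<Rightarrow> 'y mat) \<Rightarrow>
    ('u \<Rightarrow> real) \<Rightarrow> ('u \<Rightarrow> real) \<Rightarrow> ('k \<Rightarrow> 'v \<Rightarrow> real) \<Rightarrow> ('k \<Rightarrow> 'v \<Rightarrow> real) \<Rightarrow>
    'x \<Rightarrow> 'k \<Rightarrow> 'y \<Rightarrow> real" where
  "score \<nu> q \<eta> Ug Ul Dg Dl lam1 lam2 mu1 mu2 x k j =
     (\<Sum>a\<in>UNIV. q x k a * (\<Sum>i\<in>UNIV. M_mat \<nu> q Ug Ul Dg Dl lam1 lam2 mu1 mu2 a k i j * \<eta> x a k i))"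

end

theory Submission
  imports Defs
begin


lemma dens_measure:
  fixes N :: "'z measure" and g :: "'z \<Rightarrow> 'b::finite \<Rightarrow> real" and R :: "'z \<Rightarrow> 'b \<Rightarrow> bool"
  assumes fm: "finite_measure N"
    and gm: "\<And>b. (\<lambda>z. g z b) \<in> borel_measurable N"
    and gb: "\<And>z b. 0 \<le> g z b \<and> g z b \<le> B"
    and Rm: "\<And>b. {z\<in>space N. R z b} \<in> sets N"
    and sp: "space N = UNIV"
  shows "measure (density (N \<Otimes>\<^sub>M count_space UNIV) (\<lambda>w. ennreal (g (fst w) (snd w)))) {w. R (fst w) (snd w)}
     = (\<integral>z. (\<Sum>b\<in>UNIV. if R z b then g z b else 0) \<partial>N)"
proof -
  interpret finite_measure N by (rule fm)
  interpret C: sigma_finite_measure "count_space (UNIV::'b set)"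
    by (rule sigma_finite_measure_count_space_finite) simp
  define G where "G z = (\<Sum>b\<in>UNIV. if R z b then g z b else 0)" for z
  have gm2: "(\<lambda>z. if R z b then g z b else 0) \<in> borel_measurable N" for b
  proof -
    have "{z. R z b} \<inter> space N \<in> sets N" using Rm[of b] sp by (simp add: Int_commute)
    then have "(\<lambda>z. if z \<in> {z. R z b} then g z b else 0) \<in> borel_measurable N"
      by (intro measurable_If_set gm) auto
    then show ?thesis by simp
  qed
  have Gm: "G \<in> borel_measurable N" unfolding G_def using gm2 by (intro borel_measurable_sum) auto
  have Gnn: "0 \<le> G z" for z unfolding G_def using gb by (intro sum_nonneg) auto
  have Gb: "G z \<le> real CARD('b) * B" for z
  proof -
    have "G z \<le> (\<Sum>b\<in>(UNIV::'b set). B)" unfolding G_def using gb by (intro sum_mono) (auto intro: order_trans)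
    then show ?thesis by simp
  qed
  have Gint: "integrable N G"
    by (rule integrable_const_bound[where B="real CARD('b) * B"]) (use Gnn Gb Gm in auto)
  have feq: "(\<lambda>w. ennreal (g (fst w) (snd w))) = (\<lambda>w. ennreal (\<Sum>b0\<in>UNIV. if snd w = b0 then g (fst w) b0 else 0))"
    by (auto simp: if_distrib cong: if_cong)
  have fmeas: "(\<lambda>w. ennreal (g (fst w) (snd w))) \<in> borel_measurable (N \<Otimes>\<^sub>M count_space UNIV)"
    unfolding feq using gm by measurable
  have Aeq: "{w. R (fst w) (snd w)} = (\<Union>b. {z \<in> space N. R z b} \<times> {b})"
    using sp by auto
  have Aset: "{w. R (fst w) (snd w)} \<in> sets (N \<Otimes>\<^sub>M count_space UNIV)"
    unfolding Aeq using Rm by (intro sets.finite_UN) auto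
  have "emeasure (density (N \<Otimes>\<^sub>M count_space UNIV) (\<lambda>w. ennreal (g (fst w) (snd w)))) {w. R (fst w) (snd w)}
      = (\<integral>\<^sup>+ w. ennreal (g (fst w) (snd w)) * indicator {w. R (fst w) (snd w)} w \<partial>(N \<Otimes>\<^sub>M count_space UNIV))"
    by (rule emeasure_density[OF fmeas Aset])
  also have "\<dots> = (\<integral>\<^sup>+ z. \<integral>\<^sup>+ b. ennreal (g z b) * indicator {w. R (fst w) (snd w)} (z, b) \<partial>count_space UNIV \<partial>N)"
  proof -
    have m: "(\<lambda>w. ennreal (g (fst w) (snd w)) * indicator {w. R (fst w) (snd w)} w) \<in> borel_measurable (N \<Otimes>\<^sub>M count_space UNIV)"
      using fmeas Aset by measurable
    show ?thesis using C.nn_integral_fst[OF m] by simp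
  qed
  also have "\<dots> = (\<integral>\<^sup>+ z. ennreal (G z) \<partial>N)"
  proof (rule nn_integral_cong)
    fix z
    have "(\<integral>\<^sup>+ b. ennreal (g z b) * indicator {w. R (fst w) (snd w)} (z, b) \<partial>count_space UNIV)
        = (\<Sum>b\<in>UNIV. ennreal (if R z b then g z b else 0))"
      by (simp add: nn_integral_count_space_finite indicator_def of_bool_def if_distrib cong: if_cong)
    also have "\<dots> = ennreal (G z)" unfolding G_def using gb
      by (intro sum_ennreal) auto
    finally show "(\<integral>\<^sup>+ b. ennreal (g z b) * indicator {w. R (fst w) (snd w)} (z, b) \<partial>count_space UNIV) = ennreal (G z)" .
  qed
  also have "\<dots> = ennreal (integral\<^sup>L N G)"
    by (rule nn_integral_eq_integral[OF Gint]) (use Gnn in auto)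
  finally show ?thesis unfolding measure_def G_def[symmetric]
    using integral_nonneg_AE[of G N] Gnn by simp
qed



lemma prob_vec_bounds: "prob_vec v \<Longrightarrow> 0 \<le> v i \<and> v i \<le> 1"
  unfolding prob_vec_def
  by (metis finite UNIV_I member_le_sum)

lemma lag_alg:
  fixes C :: "'a::finite \<Rightarrow> 'k::finite \<Rightarrow> 'y::finite mat"
  shows
 "(\<Sum>a\<in>UNIV. \<Sum>k\<in>UNIV. p a k * mat_inner (\<lambda>i j. ones_mat i j - id_mat i j) (C a k))
  + (\<Sum>u\<in>Ug. (l1 u - l2 u) * (\<Sum>a\<in>UNIV. \<Sum>k\<in>UNIV. mat_inner (Dg u a k) (C a k)) - (l1 u + l2 u) * xg)
  + (\<Sum>k\<in>UNIV. \<Sum>u\<in>Ul k. (m1 k u - m2 k u) * (\<Sum>a\<in>UNIV. mat_inner (Dl k u a) (C a k)) - (m1 k u + m2 k u) * xl k)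
  = (- (\<Sum>u\<in>Ug. (l1 u + l2 u) * xg) - (\<Sum>k\<in>UNIV. \<Sum>u\<in>Ul k. (m1 k u + m2 k u) * xl k))
    + (\<Sum>a\<in>UNIV. \<Sum>k\<in>UNIV. \<Sum>i\<in>UNIV. \<Sum>j\<in>UNIV.
        (p a k * (ones_mat i j - id_mat i j) + (\<Sum>u\<in>Ug. (l1 u - l2 u) * Dg u a k i j)
          + (\<Sum>u\<in>Ul k. (m1 k u - m2 k u) * Dl k u a i j)) * C a k i j)"
proof -
  have P1: "(\<Sum>a\<in>UNIV. \<Sum>k\<in>UNIV. p a k * mat_inner (\<lambda>i j. ones_mat i j - id_mat i j) (C a k))
     = (\<Sum>a\<in>UNIV. \<Sum>k\<in>UNIV. \<Sum>i\<in>UNIV. \<Sum>j\<in>UNIV. p a k * (ones_mat i j - id_mat i j) * C a k i j)"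
    unfolding mat_inner_def by (simp add: sum_distrib_left mult.assoc)
  have P2: "(\<Sum>u\<in>Ug. (l1 u - l2 u) * (\<Sum>a\<in>UNIV. \<Sum>k\<in>UNIV. mat_inner (Dg u a k) (C a k)))
     = (\<Sum>a\<in>UNIV. \<Sum>k\<in>UNIV. \<Sum>i\<in>UNIV. \<Sum>j\<in>UNIV. (\<Sum>u\<in>Ug. (l1 u - l2 u) * Dg u a k i j) * C a k i j)"
  proof -
    have "(\<Sum>u\<in>Ug. (l1 u - l2 u) * (\<Sum>a\<in>UNIV. \<Sum>k\<in>UNIV. mat_inner (Dg u a k) (C a k)))
       = (\<Sum>u\<in>Ug. \<Sum>a\<in>UNIV. \<Sum>k\<in>UNIV. \<Sum>i\<in>UNIV. \<Sum>j\<in>UNIV. (l1 u - l2 u) * Dg u a k i j * C a k i j)"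
      unfolding mat_inner_def by (simp add: sum_distrib_left mult.assoc)
    also have "\<dots> = (\<Sum>a\<in>UNIV. \<Sum>u\<in>Ug. \<Sum>k\<in>UNIV. \<Sum>i\<in>UNIV. \<Sum>j\<in>UNIV. (l1 u - l2 u) * Dg u a k i j * C a k i j)"
      by (rule sum.swap)
    also have "\<dots> = (\<Sum>a\<in>UNIV. \<Sum>k\<in>UNIV. \<Sum>u\<in>Ug. \<Sum>i\<in>UNIV. \<Sum>j\<in>UNIV. (l1 u - l2 u) * Dg u a k i j * C a k i j)"
      by (rule sum.cong[OF refl], rule sum.swap)
    also have "\<dots> = (\<Sum>a\<in>UNIV. \<Sum>k\<in>UNIV. \<Sum>i\<in>UNIV. \<Sum>u\<in>Ug. \<Sum>j\<in>UNIV. (l1 u - l2 u) * Dg u a k i j * C a k i j)"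
      by (rule sum.cong[OF refl], rule sum.cong[OF refl], rule sum.swap)
    also have "\<dots> = (\<Sum>a\<in>UNIV. \<Sum>k\<in>UNIV. \<Sum>i\<in>UNIV. \<Sum>j\<in>UNIV. \<Sum>u\<in>Ug. (l1 u - l2 u) * Dg u a k i j * C a k i j)"
      by (rule sum.cong[OF refl], rule sum.cong[OF refl], rule sum.cong[OF refl], rule sum.swap)
    also have "\<dots> = (\<Sum>a\<in>UNIV. \<Sum>k\<in>UNIV. \<Sum>i\<in>UNIV. \<Sum>j\<in>UNIV. (\<Sum>u\<in>Ug. (l1 u - l2 u) * Dg u a k i j) * C a k i j)"
      by (simp add: sum_distrib_right)
    finally show ?thesis .
  qed
  have P3: "(\<Sum>k\<in>UNIV. \<Sum>u\<in>Ul k. (m1 k u - m2 k u) * (\<Sum>a\<in>UNIV. mat_inner (Dl k u a) (C a k)))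
     = (\<Sum>a\<in>UNIV. \<Sum>k\<in>UNIV. \<Sum>i\<in>UNIV. \<Sum>j\<in>UNIV. (\<Sum>u\<in>Ul k. (m1 k u - m2 k u) * Dl k u a i j) * C a k i j)"
  proof -
    have "(\<Sum>k\<in>UNIV. \<Sum>u\<in>Ul k. (m1 k u - m2 k u) * (\<Sum>a\<in>UNIV. mat_inner (Dl k u a) (C a k)))
       = (\<Sum>k\<in>UNIV. \<Sum>u\<in>Ul k. \<Sum>a\<in>UNIV. \<Sum>i\<in>UNIV. \<Sum>j\<in>UNIV. (m1 k u - m2 k u) * Dl k u a i j * C a k i j)"
      unfolding mat_inner_def by (simp add: sum_distrib_left mult.assoc)
    also have "\<dots> = (\<Sum>k\<in>UNIV. \<Sum>a\<in>UNIV. \<Sum>u\<in>Ul k. \<Sum>i\<in>UNIV. \<Sum>j\<in>UNIV. (m1 k u - m2 k u) * Dl k u a i j * C a k i j)"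
      by (rule sum.cong[OF refl], rule sum.swap)
    also have "\<dots> = (\<Sum>a\<in>UNIV. \<Sum>k\<in>UNIV. \<Sum>u\<in>Ul k. \<Sum>i\<in>UNIV. \<Sum>j\<in>UNIV. (m1 k u - m2 k u) * Dl k u a i j * C a k i j)"
      by (rule sum.swap)
    also have "\<dots> = (\<Sum>a\<in>UNIV. \<Sum>k\<in>UNIV. \<Sum>i\<in>UNIV. \<Sum>u\<in>Ul k. \<Sum>j\<in>UNIV. (m1 k u - m2 k u) * Dl k u a i j * C a k i j)"
      by (rule sum.cong[OF refl], rule sum.cong[OF refl], rule sum.swap)
    also have "\<dots> = (\<Sum>a\<in>UNIV. \<Sum>k\<in>UNIV. \<Sum>i\<in>UNIV. \<Sum>j\<in>UNIV. \<Sum>u\<in>Ul k. (m1 k u - m2 k u) * Dl k u a i j * C a k i j)"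
      by (rule sum.cong[OF refl], rule sum.cong[OF refl], rule sum.cong[OF refl], rule sum.swap)
    also have "\<dots> = (\<Sum>a\<in>UNIV. \<Sum>k\<in>UNIV. \<Sum>i\<in>UNIV. \<Sum>j\<in>UNIV. (\<Sum>u\<in>Ul k. (m1 k u - m2 k u) * Dl k u a i j) * C a k i j)"
      by (simp add: sum_distrib_right)
    finally show ?thesis .
  qed
  show ?thesis
    by (simp add: sum_subtractf P1 P2 P3 sum.distrib[symmetric] distrib_right add.assoc)
qed



lemma sum_UNIV_pair: "(\<Sum>b\<in>(UNIV::('p::finite \<times> 'r::finite) set). f b) = (\<Sum>x\<in>UNIV. \<Sum>y\<in>UNIV. f (x,y))"
  by (simp add: sum.cartesian_product)

lemma pAK_formula:
  fixes Mx :: "'x measure"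
    and \<nu> :: "('x \<times> 'k::finite) measure"
    and q :: "'x \<Rightarrow> 'k \<Rightarrow> 'a::finite \<Rightarrow> real"
  assumes nu_prob: "prob_space \<nu>"
    and nu_sets: "sets \<nu> = sets (Mx \<Otimes>\<^sub>M count_space UNIV)"
    and q_meas[measurable]: "\<And>k a. (\<lambda>x. q x k a) \<in> borel_measurable Mx"
    and q_prob: "\<And>x k. prob_vec (q x k)"
    and sp: "space Mx = UNIV"
  shows "pAK \<nu> q a k = (\<integral>z. (if snd z = k then q (fst z) k a else 0) \<partial>\<nu>)"
proof -
  have spn: "space \<nu> = UNIV" using sets_eq_imp_space_eq[OF nu_sets] sp by (simp add: space_pair_measure)
  have fm: "finite_measure \<nu>" using nu_prob by (rule prob_space.axioms(1))
  have eq1: "law_XKA \<nu> q = density (\<nu> \<Otimes>\<^sub>M count_space UNIV) (\<lambda>w. ennreal (q (fst (fst w)) (snd (fst w)) (snd w)))"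
    unfolding law_XKA_def by (simp add: split_beta')
  have gm: "(\<lambda>z. q (fst z) (snd z) b) \<in> borel_measurable \<nu>" for b
  proof -
    have "(\<lambda>z. q (fst z) (snd z) b) \<in> borel_measurable (Mx \<Otimes>\<^sub>M count_space UNIV)" by measurable
    then show ?thesis by (simp add: measurable_cong_sets[OF nu_sets refl])
  qed
  have sndm: "snd \<in> measurable \<nu> (count_space UNIV)"
    by (simp add: measurable_cong_sets[OF nu_sets refl])
  have Rm: "{z \<in> space \<nu>. snd z = k \<and> b = a} \<in> sets \<nu>" for b
  proof (cases "b = a")
    case True
    have "{z \<in> space \<nu>. snd z = k \<and> b = a} = snd -` {k} \<inter> space \<nu>" using True by auto
    then show ?thesis using measurable_sets[OF sndm, of "{k}"] by simp
  qed simp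
  have "pAK \<nu> q a k = (\<integral>z. (\<Sum>b\<in>UNIV. if snd z = k \<and> b = a then q (fst z) (snd z) b else 0) \<partial>\<nu>)"
    unfolding pAK_def eq1
    by (rule dens_measure[where g="\<lambda>z b. q (fst z) (snd z) b" and R="\<lambda>z b. snd z = k \<and> b = a" and B=1,
          OF fm gm _ Rm spn]) (use prob_vec_bounds[OF q_prob] in auto)
  also have "\<dots> = (\<integral>z. (if snd z = k then q (fst z) k a else 0) \<partial>\<nu>)"
    by (rule Bochner_Integration.integral_cong) (auto simp: sum.delta')
  finally show ?thesis .
qed

lemma conf_formula:
  fixes Mx :: "'x measure"
    and \<nu> :: "('x \<times> 'k::finite) measure"
    and q :: "'x \<Rightarrow> 'k \<Rightarrow> 'a::finite \<Rightarrow> real"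
    and \<eta> :: "'x \<Rightarrow> 'a \<Rightarrow> 'k \<Rightarrow> 'y::finite \<Rightarrow> real"
    and h :: "'k \<Rightarrow> 'x \<Rightarrow> 'y \<Rightarrow> real"
  assumes nu_prob: "prob_space \<nu>"
    and nu_sets: "sets \<nu> = sets (Mx \<Otimes>\<^sub>M count_space UNIV)"
    and q_meas[measurable]: "\<And>k a. (\<lambda>x. q x k a) \<in> borel_measurable Mx"
    and eta_meas[measurable]: "\<And>a k i. (\<lambda>x. \<eta> x a k i) \<in> borel_measurable Mx"
    and h_meas[measurable]: "\<And>k j. (\<lambda>x. h k x j) \<in> borel_measurable Mx"
    and q_prob: "\<And>x k. prob_vec (q x k)"
    and eta_prob: "\<And>x a k. prob_vec (\<eta> x a k)"
    and h_prob: "\<And>x k. prob_vec (h k x)"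
    and sp: "space Mx = UNIV"
  shows "confusion \<nu> q \<eta> h a k i j =
     (\<integral>z. (if snd z = k then q (fst z) k a * \<eta> (fst z) a k i * h k (fst z) j else 0) \<partial>\<nu>) / pAK \<nu> q a k"
proof -
  have spn: "space \<nu> = UNIV" using sets_eq_imp_space_eq[OF nu_sets] sp by (simp add: space_pair_measure)
  have fm: "finite_measure \<nu>" using nu_prob by (rule prob_space.axioms(1))
  define g where "g z b = q (fst z) (snd z) (fst b) * \<eta> (fst z) (fst b) (snd z) (fst (snd b)) * h (snd z) (fst z) (snd (snd b))"
    for z :: "'x \<times> 'k" and b :: "'a \<times> 'y \<times> 'y"
  have eq1: "full_law \<nu> q \<eta> h = density (\<nu> \<Otimes>\<^sub>M count_space UNIV) (\<lambda>w. ennreal (g (fst w) (snd w)))"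
    unfolding full_law_def g_def by (simp add: split_beta')
  have gm: "(\<lambda>z. g z b) \<in> borel_measurable \<nu>" for b
  proof -
    have "(\<lambda>z. g z b) \<in> borel_measurable (Mx \<Otimes>\<^sub>M count_space UNIV)" unfolding g_def by measurable
    then show ?thesis by (simp add: measurable_cong_sets[OF nu_sets refl])
  qed
  have gb: "0 \<le> g z b \<and> g z b \<le> 1" for z b
    unfolding g_def using prob_vec_bounds[OF q_prob] prob_vec_bounds[OF eta_prob] prob_vec_bounds[OF h_prob]
    by (simp add: mult_le_one)
  have sndm: "snd \<in> measurable \<nu> (count_space UNIV)"
    by (simp add: measurable_cong_sets[OF nu_sets refl])
  have Rm: "{z \<in> space \<nu>. snd z = k \<and> P b} \<in> sets \<nu>" for b and P :: "'a \<times> 'y \<times> 'y \<Rightarrow> bool"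
  proof (cases "P b")
    case True
    have "{z \<in> space \<nu>. snd z = k \<and> P b} = snd -` {k} \<inter> space \<nu>" using True by auto
    then show ?thesis using measurable_sets[OF sndm, of "{k}"] by simp
  qed simp
  have E1: "{z. snd (fst z) = k \<and> fst (snd z) = a} \<inter> {z. fst (snd (snd z)) = i \<and> snd (snd (snd z)) = j}
     = {w. snd (fst w) = k \<and> snd w = (a,i,j)}" by auto
  have num: "measure (full_law \<nu> q \<eta> h) ({z. snd (fst z) = k \<and> fst (snd z) = a} \<inter> {z. fst (snd (snd z)) = i \<and> snd (snd (snd z)) = j})
      = (\<integral>z. (if snd z = k then q (fst z) k a * \<eta> (fst z) a k i * h k (fst z) j else 0) \<partial>\<nu>)"
  proof -
    have "measure (full_law \<nu> q \<eta> h) ({z. snd (fst z) = k \<and> fst (snd z) = a} \<inter> {z. fst (snd (snd z)) = i \<and> snd (snd (snd z)) = j})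
      = (\<integral>z. (\<Sum>b\<in>UNIV. if snd z = k \<and> b = (a,i,j) then g z b else 0) \<partial>\<nu>)"
      unfolding eq1 E1 by (rule dens_measure[where g=g and R="\<lambda>z b. snd z = k \<and> b = (a,i,j)", OF fm gm gb Rm[where P="\<lambda>b. b = (a,i,j)"] spn])
    also have "\<dots> = (\<integral>z. (if snd z = k then q (fst z) k a * \<eta> (fst z) a k i * h k (fst z) j else 0) \<partial>\<nu>)"
      by (rule Bochner_Integration.integral_cong) (auto simp: sum.delta' g_def)
    finally show ?thesis .
  qed
  have den: "measure (full_law \<nu> q \<eta> h) {z. snd (fst z) = k \<and> fst (snd z) = a} = pAK \<nu> q a k"
  proof -
    have "measure (full_law \<nu> q \<eta> h) {z. snd (fst z) = k \<and> fst (snd z) = a}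
      = (\<integral>z. (\<Sum>b\<in>UNIV. if snd z = k \<and> fst b = a then g z b else 0) \<partial>\<nu>)"
      unfolding eq1 by (rule dens_measure[where g=g and R="\<lambda>z b. snd z = k \<and> fst b = a", OF fm gm gb Rm[where P="\<lambda>b. fst b = a"] spn])
    also have "\<dots> = (\<integral>z. (if snd z = k then q (fst z) k a else 0) \<partial>\<nu>)"
    proof (rule Bochner_Integration.integral_cong[OF refl])
      fix z :: "'x \<times> 'k"
      have "(\<Sum>b\<in>UNIV. if snd z = k \<and> fst b = a then g z b else 0)
          = (\<Sum>a'\<in>UNIV. \<Sum>ij\<in>UNIV. if snd z = k \<and> a' = a then g z (a', ij) else 0)"
        by (subst sum_UNIV_pair) simp
      also have "\<dots> = (\<Sum>ij\<in>UNIV. if snd z = k then g z (a, ij) else 0)"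
      proof (cases "snd z = k")
        case True
        have "(\<Sum>a'\<in>UNIV. \<Sum>ij\<in>UNIV. if snd z = k \<and> a' = a then g z (a', ij) else 0)
            = (\<Sum>a'\<in>UNIV. if a' = a then (\<Sum>ij\<in>UNIV. g z (a', ij)) else 0)"
          using True by (intro sum.cong) auto
        also have "\<dots> = (\<Sum>ij\<in>UNIV. g z (a, ij))" by simp
        finally show ?thesis using True by simp
      qed simp
      also have "\<dots> = (\<Sum>i'\<in>UNIV. \<Sum>j'\<in>UNIV. if snd z = k then g z (a, i', j') else 0)"
        by (rule sum_UNIV_pair)
      also have "\<dots> = (if snd z = k then q (fst z) k a * (\<Sum>i'\<in>UNIV. \<eta> (fst z) a k i' * (\<Sum>j'\<in>UNIV. h k (fst z) j')) else 0)"
        by (cases "snd z = k") (simp_all add: g_def sum_distrib_left mult.assoc)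
      also have "\<dots> = (if snd z = k then q (fst z) k a else 0)"
        using eta_prob h_prob by (simp add: prob_vec_def)
      finally show "(\<Sum>b\<in>UNIV. if snd z = k \<and> fst b = a then g z b else 0) = (if snd z = k then q (fst z) k a else 0)" .
    qed
    also have "\<dots> = pAK \<nu> q a k"
      by (rule pAK_formula[OF nu_prob nu_sets q_meas q_prob sp, symmetric])
    finally show ?thesis .
  qed
  show ?thesis unfolding confusion_def Let_def num den ..
qed



theorem proposition2:
  fixes Mx :: "'x measure"
    and \<nu> :: "('x \<times> 'k::finite) measure"
    and q :: "'x \<Rightarrow> 'k \<Rightarrow> 'a::finite \<Rightarrow> real"
    and \<eta> :: "'x \<Rightarrow> 'a \<Rightarrow> 'k \<Rightarrow> 'y::finite \<Rightarrow> real"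
    and Ug :: "'u set" and Ul :: "'k \<Rightarrow> 'v set"
    and Dg :: "'u \<Rightarrow> 'a \<Rightarrow> 'k \<Rightarrow> 'y mat" and Dl :: "'k \<Rightarrow> 'v \<Rightarrow> 'a \<Rightarrow> 'y mat"
    and \<xi>g :: real and \<xi>l :: "'k \<Rightarrow> real"
    and lam1 lam2 :: "'u \<Rightarrow> real" and mu1 mu2 :: "'k \<Rightarrow> 'v \<Rightarrow> real"
  assumes nu_prob: "prob_space \<nu>"
    and nu_sets: "sets \<nu> = sets (Mx \<Otimes>\<^sub>M count_space UNIV)"
    and q_meas: "\<And>k a. (\<lambda>x. q x k a) \<in> borel_measurable Mx"
    and q_prob: "\<And>x k. x \<in> space Mx \<Longrightarrow> prob_vec (q x k)"
    and eta_meas: "\<And>a k i. (\<lambda>x. \<eta> x a k i) \<in> borel_measurable Mx"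
    and eta_prob: "\<And>x a k. x \<in> space Mx \<Longrightarrow> prob_vec (\<eta> x a k)"
    and p_pos: "\<And>a k. pAK \<nu> q a k > 0"
    and Ug_fin: "finite Ug" and Ul_fin: "\<And>k. finite (Ul k)"
    and xi_pos: "\<xi>g > 0" "\<And>k. \<xi>l k > 0"
    and lam_nonneg: "\<And>u. u \<in> Ug \<Longrightarrow> lam1 u \<ge> 0 \<and> lam2 u \<ge> 0"
    and mu_nonneg: "\<And>k u. u \<in> Ul k \<Longrightarrow> mu1 k u \<ge> 0 \<and> mu2 k u \<ge> 0"
  shows "(\<exists>hs :: 'k \<Rightarrow> 'x \<Rightarrow> 'y \<Rightarrow> real.
            (\<forall>k. is_classifier Mx (hs k) \<and> is_deterministic Mx (hs k)) \<and>
            (\<forall>k. \<forall>x\<in>space Mx. \<exists>y. hs k x = basis_vec y \<and>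
                 (\<forall>j. score \<nu> q \<eta> Ug Ul Dg Dl lam1 lam2 mu1 mu2 x k j
                      \<le> score \<nu> q \<eta> Ug Ul Dg Dl lam1 lam2 mu1 mu2 x k y)))
       \<and> (\<forall>hs :: 'k \<Rightarrow> 'x \<Rightarrow> 'y \<Rightarrow> real.
            (\<forall>k. is_classifier Mx (hs k)) \<and>
            (\<forall>k. \<forall>x\<in>space Mx. \<exists>y. hs k x = basis_vec y \<and>
                 (\<forall>j. score \<nu> q \<eta> Ug Ul Dg Dl lam1 lam2 mu1 mu2 x k j
                      \<le> score \<nu> q \<eta> Ug Ul Dg Dl lam1 lam2 mu1 mu2 x k y))
          \<longrightarrow> (\<forall>h :: 'k \<Rightarrow> 'x \<Rightarrow> 'y \<Rightarrow> real. (\<forall>k. is_classifier Mx (h k)) \<longrightarrow>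
                 lagrangian \<nu> q \<eta> Ug Ul Dg Dl \<xi>g \<xi>l hs lam1 lam2 mu1 mu2
                 \<le> lagrangian \<nu> q \<eta> Ug Ul Dg Dl \<xi>g \<xi>l h lam1 lam2 mu1 mu2))"

proof -
  note [measurable] = q_meas eta_meas
  have sp: "space Mx = UNIV"
  proof -
    { fix x :: 'x
      obtain a :: 'a and k :: 'k where True by simp
      let ?S = "{z :: ('x \<times> 'k) \<times> 'a. snd (fst z) = k \<and> snd z = a}"
      have "measure (law_XKA \<nu> q) ?S \<noteq> 0" using p_pos[of a k] unfolding pAK_def by simp
      then have "?S \<in> sets (law_XKA \<nu> q)" using measure_notin_sets by blast
      then have "?S \<subseteq> space (law_XKA \<nu> q)" by (rule sets.sets_into_space)
      moreover have "space (law_XKA \<nu> q) = space \<nu> \<times> UNIV" by (simp add: law_XKA_def space_pair_measure)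
      moreover have "space \<nu> = space Mx \<times> UNIV" using sets_eq_imp_space_eq[OF nu_sets] by (simp add: space_pair_measure)
      ultimately have sub: "?S \<subseteq> (space Mx \<times> UNIV) \<times> UNIV" by simp
      have "((x,k),a) \<in> ?S" by simp
      with sub have "((x,k),a) \<in> (space Mx \<times> UNIV) \<times> UNIV" by blast
      then have "x \<in> space Mx" by auto }
    then show ?thesis by auto
  qed
  have spn: "space \<nu> = UNIV" using sets_eq_imp_space_eq[OF nu_sets] sp by (simp add: space_pair_measure)
  have qp: "\<And>x k. prob_vec (q x k)" using q_prob sp by auto
  have ep: "\<And>x a k. prob_vec (\<eta> x a k)" using eta_prob sp by auto
  have fm: "finite_measure \<nu>" using nu_prob by (rule prob_space.axioms(1))
  have pne: "pAK \<nu> q a k \<noteq> 0" for a k using p_pos[of a k] by simp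
  define S where "S = score \<nu> q \<eta> Ug Ul Dg Dl lam1 lam2 mu1 mu2"
  define Mm where "Mm = M_mat \<nu> q Ug Ul Dg Dl lam1 lam2 mu1 mu2"
  define p where "p = pAK \<nu> q"
  define c where "c a k i j = p a k * (ones_mat i j - id_mat i j) + (\<Sum>u\<in>Ug. (lam1 u - lam2 u) * Dg u a k i j)
          + (\<Sum>u\<in>Ul k. (mu1 k u - mu2 k u) * Dl k u a i j)" for a k i j
  define K where "K = - (\<Sum>u\<in>Ug. (lam1 u + lam2 u) * \<xi>g) - (\<Sum>k\<in>UNIV. \<Sum>u\<in>Ul k. (mu1 k u + mu2 k u) * \<xi>l k)"
  have S_meas[measurable]: "(\<lambda>x. S x k j) \<in> borel_measurable Mx" for k j
    unfolding S_def score_def by measurable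
  have cM: "c a k i j / p a k = 1 - Mm a k i j" for a k i j
    using pne[of a k] unfolding c_def Mm_def M_mat_def p_def ones_mat_def id_mat_def
    by (simp add: field_simps)
  define F where "F h a k i j z = (if snd z = k then q (fst z) k a * \<eta> (fst z) a k i * h k (fst z) j else 0)"
    for h :: "'k \<Rightarrow> 'x \<Rightarrow> 'y \<Rightarrow> real" and a k i j and z :: "'x \<times> 'k"
  define \<Psi> where "\<Psi> h z = 1 - (\<Sum>j\<in>UNIV. h (snd z) (fst z) j * S (fst z) (snd z) j)"
    for h :: "'k \<Rightarrow> 'x \<Rightarrow> 'y \<Rightarrow> real" and z :: "'x \<times> 'k"
  have repr: "lagrangian \<nu> q \<eta> Ug Ul Dg Dl \<xi>g \<xi>l h lam1 lam2 mu1 mu2 = K + integral\<^sup>L \<nu> (\<Psi> h)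
      \<and> integrable \<nu> (\<Psi> h)"
    if hc: "\<forall>k. is_classifier Mx (h k)" for h
  proof -
    have hm[measurable]: "(\<lambda>x. h k x j) \<in> borel_measurable Mx" for k j
      using hc unfolding is_classifier_def by auto
    have hp: "prob_vec (h k x)" for k x using hc sp unfolding is_classifier_def by auto
    have Fint: "integrable \<nu> (F h a k i j)" for a k i j
    proof -
      interpret finite_measure \<nu> by (rule fm)
      have "F h a k i j \<in> borel_measurable (Mx \<Otimes>\<^sub>M count_space UNIV)" unfolding F_def by measurable
      then have m: "F h a k i j \<in> borel_measurable \<nu>" by (simp add: measurable_cong_sets[OF nu_sets refl])
      have "norm (F h a k i j z) \<le> 1" for z
        unfolding F_def using prob_vec_bounds[OF qp] prob_vec_bounds[OF ep] prob_vec_bounds[OF hp]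
        by (simp add: mult_le_one)
      then show ?thesis by (intro integrable_const_bound[where B=1] m) auto
    qed
    have conf: "confusion \<nu> q \<eta> h a k i j = integral\<^sup>L \<nu> (F h a k i j) / p a k" for a k i j
      unfolding F_def p_def
      by (rule conf_formula[OF nu_prob nu_sets q_meas eta_meas hm qp ep hp sp])
    have L1: "lagrangian \<nu> q \<eta> Ug Ul Dg Dl \<xi>g \<xi>l h lam1 lam2 mu1 mu2
        = K + (\<Sum>a\<in>UNIV. \<Sum>k\<in>UNIV. \<Sum>i\<in>UNIV. \<Sum>j\<in>UNIV. c a k i j * confusion \<nu> q \<eta> h a k i j)"
      unfolding lagrangian_def risk_def global_disp_def local_disp_def K_def c_def p_def
      by (rule lag_alg)
    also have "\<dots> = K + (\<Sum>a\<in>UNIV. \<Sum>k\<in>UNIV. \<Sum>i\<in>UNIV. \<Sum>j\<in>UNIV. integral\<^sup>L \<nu> (\<lambda>z. c a k i j / p a k * F h a k i j z))"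
      by (simp add: conf)
    also have "\<dots> = K + integral\<^sup>L \<nu> (\<lambda>z. \<Sum>a\<in>UNIV. \<Sum>k\<in>UNIV. \<Sum>i\<in>UNIV. \<Sum>j\<in>UNIV. c a k i j / p a k * F h a k i j z)"
      by (simp add: integral_sum Fint)
    finally have L2: "lagrangian \<nu> q \<eta> Ug Ul Dg Dl \<xi>g \<xi>l h lam1 lam2 mu1 mu2 =
       K + integral\<^sup>L \<nu> (\<lambda>z. \<Sum>a\<in>UNIV. \<Sum>k\<in>UNIV. \<Sum>i\<in>UNIV. \<Sum>j\<in>UNIV. c a k i j / p a k * F h a k i j z)" .
    have Iint: "integrable \<nu> (\<lambda>z. \<Sum>a\<in>UNIV. \<Sum>k\<in>UNIV. \<Sum>i\<in>UNIV. \<Sum>j\<in>UNIV. c a k i j / p a k * F h a k i j z)"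
      by (simp add: Fint)
    have pw: "(\<Sum>a\<in>UNIV. \<Sum>k\<in>UNIV. \<Sum>i\<in>UNIV. \<Sum>j\<in>UNIV. c a k i j / p a k * F h a k i j z) = \<Psi> h z" for z
    proof -
      obtain x k' where z: "z = (x,k')" by (cases z)
      have e1: "(\<Sum>i\<in>UNIV. \<Sum>j\<in>UNIV. c a k i j / p a k * F h a k i j z)
          = (if k = k' then (\<Sum>i\<in>UNIV. \<Sum>j\<in>UNIV. c a k i j / p a k * (q x k a * \<eta> x a k i * h k x j)) else 0)" for a k
        by (cases "k = k'") (auto simp: F_def z)
      have "(\<Sum>a\<in>UNIV. \<Sum>k\<in>UNIV. \<Sum>i\<in>UNIV. \<Sum>j\<in>UNIV. c a k i j / p a k * F h a k i j z)
          = (\<Sum>a\<in>UNIV. \<Sum>i\<in>UNIV. \<Sum>j\<in>UNIV. c a k' i j / p a k' * (q x k' a * \<eta> x a k' i * h k' x j))"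
        by (simp only: e1) (simp add: sum.delta)
      also have "\<dots> = (\<Sum>a\<in>UNIV. \<Sum>i\<in>UNIV. \<Sum>j\<in>UNIV. q x k' a * \<eta> x a k' i * h k' x j)
          - (\<Sum>a\<in>UNIV. \<Sum>i\<in>UNIV. \<Sum>j\<in>UNIV. Mm a k' i j * (q x k' a * \<eta> x a k' i * h k' x j))"
        by (simp add: cM left_diff_distrib sum_subtractf)
      also have "(\<Sum>a\<in>UNIV. \<Sum>i\<in>UNIV. \<Sum>j\<in>UNIV. q x k' a * \<eta> x a k' i * h k' x j) = 1"
      proof -
        have "(\<Sum>a\<in>UNIV. \<Sum>i\<in>UNIV. \<Sum>j\<in>UNIV. q x k' a * \<eta> x a k' i * h k' x j)
            = (\<Sum>a\<in>UNIV. q x k' a * (\<Sum>i\<in>UNIV. \<eta> x a k' i * (\<Sum>j\<in>UNIV. h k' x j)))"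
          by (simp add: sum_distrib_left mult.assoc)
        also have "\<dots> = 1" using qp[of x k'] ep hp[of k' x] by (simp add: prob_vec_def)
        finally show ?thesis .
      qed
      also have "(\<Sum>a\<in>UNIV. \<Sum>i\<in>UNIV. \<Sum>j\<in>UNIV. Mm a k' i j * (q x k' a * \<eta> x a k' i * h k' x j))
          = (\<Sum>j\<in>UNIV. h k' x j * S x k' j)"
      proof -
        have "(\<Sum>a\<in>UNIV. \<Sum>i\<in>UNIV. \<Sum>j\<in>UNIV. Mm a k' i j * (q x k' a * \<eta> x a k' i * h k' x j))
            = (\<Sum>a\<in>UNIV. \<Sum>j\<in>UNIV. \<Sum>i\<in>UNIV. Mm a k' i j * (q x k' a * \<eta> x a k' i * h k' x j))"
          by (rule sum.cong[OF refl], rule sum.swap)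
        also have "\<dots> = (\<Sum>j\<in>UNIV. \<Sum>a\<in>UNIV. \<Sum>i\<in>UNIV. Mm a k' i j * (q x k' a * \<eta> x a k' i * h k' x j))"
          by (rule sum.swap)
        also have "\<dots> = (\<Sum>j\<in>UNIV. h k' x j * S x k' j)"
          unfolding S_def score_def Mm_def[symmetric]
          by (simp add: sum_distrib_left mult_ac)
        finally show ?thesis .
      qed
      finally show ?thesis unfolding \<Psi>_def z by simp
    qed
    show ?thesis using L2 Iint pw by (simp add: integrable_cong)
  qed
  have part2: "\<forall>hs :: 'k \<Rightarrow> 'x \<Rightarrow> 'y \<Rightarrow> real.
            (\<forall>k. is_classifier Mx (hs k)) \<and>
            (\<forall>k. \<forall>x\<in>space Mx. \<exists>y. hs k x = basis_vec y \<and>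
                 (\<forall>j. score \<nu> q \<eta> Ug Ul Dg Dl lam1 lam2 mu1 mu2 x k j
                      \<le> score \<nu> q \<eta> Ug Ul Dg Dl lam1 lam2 mu1 mu2 x k y))
          \<longrightarrow> (\<forall>h :: 'k \<Rightarrow> 'x \<Rightarrow> 'y \<Rightarrow> real. (\<forall>k. is_classifier Mx (h k)) \<longrightarrow>
                 lagrangian \<nu> q \<eta> Ug Ul Dg Dl \<xi>g \<xi>l hs lam1 lam2 mu1 mu2
                 \<le> lagrangian \<nu> q \<eta> Ug Ul Dg Dl \<xi>g \<xi>l h lam1 lam2 mu1 mu2)"
  proof (intro allI impI)
    fix hs h :: "'k \<Rightarrow> 'x \<Rightarrow> 'y \<Rightarrow> real"
    assume H: "(\<forall>k. is_classifier Mx (hs k)) \<and>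
            (\<forall>k. \<forall>x\<in>space Mx. \<exists>y. hs k x = basis_vec y \<and>
                 (\<forall>j. score \<nu> q \<eta> Ug Ul Dg Dl lam1 lam2 mu1 mu2 x k j
                      \<le> score \<nu> q \<eta> Ug Ul Dg Dl lam1 lam2 mu1 mu2 x k y))"
      and hc: "\<forall>k. is_classifier Mx (h k)"
    have hp: "prob_vec (h k x)" for k x using hc sp unfolding is_classifier_def by auto
    have r1: "lagrangian \<nu> q \<eta> Ug Ul Dg Dl \<xi>g \<xi>l hs lam1 lam2 mu1 mu2 = K + integral\<^sup>L \<nu> (\<Psi> hs)"
      and i1: "integrable \<nu> (\<Psi> hs)" using repr[of hs] H by auto
    have r2: "lagrangian \<nu> q \<eta> Ug Ul Dg Dl \<xi>g \<xi>l h lam1 lam2 mu1 mu2 = K + integral\<^sup>L \<nu> (\<Psi> h)"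
      and i2: "integrable \<nu> (\<Psi> h)" using repr[of h] hc by auto
    have le: "\<Psi> hs z \<le> \<Psi> h z" for z
    proof -
      obtain x k' where z: "z = (x,k')" by (cases z)
      obtain y where y1: "hs k' x = basis_vec y" and y2: "\<And>j. S x k' j \<le> S x k' y"
        using H sp unfolding S_def by blast
      have "(\<Sum>j\<in>UNIV. hs k' x j * S x k' j) = S x k' y"
        unfolding y1 basis_vec_def by (simp add: if_distrib[of "\<lambda>t. t * _"] cong: if_cong)
      moreover have "(\<Sum>j\<in>UNIV. h k' x j * S x k' j) \<le> (\<Sum>j\<in>UNIV. h k' x j * S x k' y)"
        by (intro sum_mono mult_left_mono y2) (use prob_vec_bounds[OF hp] in auto)
      moreover have "(\<Sum>j\<in>UNIV. h k' x j * S x k' y) = S x k' y"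
        using hp[of k' x] by (simp add: sum_distrib_right[symmetric] prob_vec_def)
      ultimately show ?thesis unfolding \<Psi>_def z by simp
    qed
    show "lagrangian \<nu> q \<eta> Ug Ul Dg Dl \<xi>g \<xi>l hs lam1 lam2 mu1 mu2
                 \<le> lagrangian \<nu> q \<eta> Ug Ul Dg Dl \<xi>g \<xi>l h lam1 lam2 mu1 mu2"
      unfolding r1 r2 using integral_mono[OF i1 i2 le] by simp
  qed
  define mx where "mx x k y = (\<forall>j. S x k j \<le> S x k y)" for x k y
  define ch where "ch x k y = (mx x k y \<and> (\<forall>y'. mx x k y' \<longrightarrow> to_nat y \<le> to_nat y'))" for x k y
  have ex1: "\<exists>!y. ch x k y" for x k
  proof -
    have fin: "finite (range (S x k))" by simp
    have "Max (range (S x k)) \<in> range (S x k)" using Max_in[OF fin] by simp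
    then obtain y0 where "S x k y0 = Max (range (S x k))" by (metis imageE)
    then have "mx x k y0" unfolding mx_def using Max_ge[OF fin] by auto
    then obtain y where "mx x k y \<and> (\<forall>y'. mx x k y' \<longrightarrow> to_nat y \<le> to_nat y')"
      using ex_has_least_nat[of "mx x k" y0 to_nat] by blast
    then have c: "ch x k y" unfolding ch_def by blast
    have "y' = y" if "ch x k y'" for y'
      using c that unfolding ch_def by (metis le_antisym to_nat_split)
    with c show ?thesis by blast
  qed
  define hs where "hs k x = basis_vec (THE y. ch x k y)" for k x
  have hsy: "ch x k (THE y. ch x k y)" for x k using theI'[OF ex1] .
  have hs_eq: "(\<lambda>x. hs k x j) = (\<lambda>x. if ch x k j then 1 else 0)" for k j
  proof
    fix x
    show "hs k x j = (if ch x k j then 1 else 0)"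
      using hsy[of x k] ex1[of x k] unfolding hs_def basis_vec_def by auto
  qed
  have hs_meas: "(\<lambda>x. hs k x j) \<in> borel_measurable Mx" for k j
    unfolding hs_eq ch_def mx_def by measurable
  have part1: "\<exists>hs :: 'k \<Rightarrow> 'x \<Rightarrow> 'y \<Rightarrow> real.
            (\<forall>k. is_classifier Mx (hs k) \<and> is_deterministic Mx (hs k)) \<and>
            (\<forall>k. \<forall>x\<in>space Mx. \<exists>y. hs k x = basis_vec y \<and>
                 (\<forall>j. score \<nu> q \<eta> Ug Ul Dg Dl lam1 lam2 mu1 mu2 x k j
                      \<le> score \<nu> q \<eta> Ug Ul Dg Dl lam1 lam2 mu1 mu2 x k y))"
  proof (intro exI[of _ hs] conjI allI ballI)
    fix k
    have pv: "prob_vec (basis_vec y :: 'y \<Rightarrow> real)" for y :: 'y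
      unfolding prob_vec_def basis_vec_def by simp
    show "is_classifier Mx (hs k)" unfolding is_classifier_def using hs_meas pv hs_def by auto
    show "is_deterministic Mx (hs k)" unfolding is_deterministic_def hs_def by auto
  next
    fix k x
    show "\<exists>y. hs k x = basis_vec y \<and>
                 (\<forall>j. score \<nu> q \<eta> Ug Ul Dg Dl lam1 lam2 mu1 mu2 x k j
                      \<le> score \<nu> q \<eta> Ug Ul Dg Dl lam1 lam2 mu1 mu2 x k y)"
      using hsy[of x k] unfolding hs_def ch_def mx_def S_def by blast
  qed
  show ?thesis using part1 part2 by blast
qed


end
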